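(* Let $P$ be a distribution on $\mathcal{X}$, $R>0$, $K>0$. Then \[ E_e(P,R,K)=\sup_{0\le\eta\le\rho\le 1}\big\{E_0(\rho,\eta,P)-\rho R-\eta K\big\}, \] where \[ E_e(P,R,K)=\min_{TV}\Big\{D(TV\|PW)+\big|A_{TV}-R+|B_{TV}-K|^{+}\big|^{+}\Big\},\qquad E_0(\rho,\eta,P)=-\log\sum_{y}\Big[\sum_x P(x)W^{\frac{1+\eta}{1+\rho}}(y|x)\Big]^{1+\rho}. \]
   Context: $\mathcal{X},\mathcal{Y}$ are finite alphabets and $W(y|x)$ is a conditional distribution on $\mathcal{Y}$ given $\mathcal{X}$. Logs are natural. $TV$ is a joint distribution on $\mathcal{Y}\times\mathcal{X}$ with $\mathcal{Y}$-marginal $T$ and conditional $V(x|y)$, minimized over all such distributions; $PW$ is $P(x)W(y|x)$; $D(TV\|PW)=\sum T(y)V(x|y)\log\frac{T(y)V(x|y)}{P(x)W(y|x)}$; $A_{TV}=\sum T(y)V(x|y)\log\frac{V(x|y)}{P(x)}$; $B_{TV}=\mathbb{E}_{TV}[-\log W(Y|X)]$; $|t|^{+}=\max\{0,t\}$. *)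

theory Defs
  imports "HOL-Analysis.Analysis"
begin

text \<open>Channel W(y|x) is written W x y; a joint distribution TV on Y x X is Q y x = T(y) V(x|y).\<close>

definition channel :: "('x::finite \<Rightarrow> 'y::finite \<Rightarrow> real) \<Rightarrow> bool" where
  "channel W \<longleftrightarrow> (\<forall>x y. 0 \<le> W x y) \<and> (\<forall>x. (\<Sum>y\<in>UNIV. W x y) = 1)"

definition distr :: "('a::finite \<Rightarrow> real) \<Rightarrow> bool" where
  "distr P \<longleftrightarrow> (\<forall>a. 0 \<le> P a) \<and> (\<Sum>a\<in>UNIV. P a) = 1"

definition posp :: "real \<Rightarrow> real" where
  "posp t = max 0 t"

text \<open>Joint distributions on Y x X for which D(TV||PW) is finite
  (all others have D = +infinity and do not affect the minimum).\<close>
definition joint_dists :: "('x::finite \<Rightarrow> real) \<Rightarrow> ('x \<Rightarrow> 'y::finite \<Rightarrow> real) \<Rightarrow> ('y \<Rightarrow> 'x \<Rightarrow> real) set" where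
  "joint_dists P W = {Q. (\<forall>y x. 0 \<le> Q y x) \<and> (\<Sum>y\<in>UNIV. \<Sum>x\<in>UNIV. Q y x) = 1
                        \<and> (\<forall>y x. 0 < Q y x \<longrightarrow> 0 < P x * W x y)}"

definition margT :: "('y \<Rightarrow> 'x::finite \<Rightarrow> real) \<Rightarrow> 'y \<Rightarrow> real" where
  "margT Q y = (\<Sum>x\<in>UNIV. Q y x)"

definition condV :: "('y \<Rightarrow> 'x::finite \<Rightarrow> real) \<Rightarrow> 'y \<Rightarrow> 'x \<Rightarrow> real" where
  "condV Q y x = Q y x / margT Q y"

text \<open>Terms with Q y x = 0 vanish (convention 0 log 0 = 0).\<close>
definition divKL :: "('y::finite \<Rightarrow> 'x::finite \<Rightarrow> real) \<Rightarrow> ('x \<Rightarrow> real) \<Rightarrow> ('x \<Rightarrow> 'y \<Rightarrow> real) \<Rightarrow> real" where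
  "divKL Q P W = (\<Sum>y\<in>UNIV. \<Sum>x\<in>UNIV. Q y x * ln (Q y x / (P x * W x y)))"

definition A_TV :: "('y::finite \<Rightarrow> 'x::finite \<Rightarrow> real) \<Rightarrow> ('x \<Rightarrow> real) \<Rightarrow> real" where
  "A_TV Q P = (\<Sum>y\<in>UNIV. \<Sum>x\<in>UNIV. Q y x * ln (condV Q y x / P x))"

definition B_TV :: "('y::finite \<Rightarrow> 'x::finite \<Rightarrow> real) \<Rightarrow> ('x \<Rightarrow> 'y \<Rightarrow> real) \<Rightarrow> real" where
  "B_TV Q W = (\<Sum>y\<in>UNIV. \<Sum>x\<in>UNIV. Q y x * (- ln (W x y)))"

definition E_e :: "('x::finite \<Rightarrow> 'y::finite \<Rightarrow> real) \<Rightarrow> ('x \<Rightarrow> real) \<Rightarrow> real \<Rightarrow> real \<Rightarrow> real" where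
  "E_e W P R K = (INF Q\<in>joint_dists P W.
      divKL Q P W + posp (A_TV Q P - R + posp (B_TV Q W - K)))"

definition E_0 :: "('x::finite \<Rightarrow> 'y::finite \<Rightarrow> real) \<Rightarrow> real \<Rightarrow> real \<Rightarrow> ('x \<Rightarrow> real) \<Rightarrow> real" where
  "E_0 W \<rho> \<eta> P = - ln (\<Sum>y\<in>UNIV.
      (\<Sum>x\<in>UNIV. P x * W x y powr ((1 + \<eta>) / (1 + \<rho>))) powr (1 + \<rho>))"

end

theory Submission imports Defs begin

lemma logsum_term:
  fixes a b al be :: real
  assumes "a \<ge> 0" "b \<ge> 0" "a > 0 \<Longrightarrow> b > 0" "al > 0" "be > 0"
  shows "a * ln (a / b) \<ge> a * ln (al / be) + a - b * al / be"
proof (cases "a = 0")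
  case True then show ?thesis using assms by simp
next
  case False
  then have a: "a > 0" using assms by simp
  then have b: "b > 0" using assms by simp
  have x: "b * al / (a * be) > 0" using a b assms by simp
  have "ln (b * al / (a * be)) \<le> b * al / (a * be) - 1" by (rule ln_le_minus_one[OF x])
  moreover have "ln (b * al / (a * be)) = ln (al / be) - ln (a / b)"
    using a b assms by (simp add: ln_div ln_mult)
  ultimately have "ln (al / be) - ln (a / b) \<le> b * al / (a * be) - 1" by simp
  then have "a * (ln (al / be) - ln (a / b)) \<le> a * (b * al / (a * be) - 1)"
    using a by (simp add: mult_left_mono)
  moreover have "a * (b * al / (a * be) - 1) = b * al / be - a" using a by (simp add: field_simps)
  ultimately show ?thesis by (simp add: algebra_simps)
qed

lemma logsum:
  fixes a b :: "'i \<Rightarrow> real"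
  assumes "finite I" "\<And>i. i \<in> I \<Longrightarrow> a i \<ge> 0" "\<And>i. i \<in> I \<Longrightarrow> b i \<ge> 0"
    "\<And>i. i \<in> I \<Longrightarrow> a i > 0 \<Longrightarrow> b i > 0" "sum a I = al" "al > 0"
  shows "(\<Sum>i\<in>I. a i * ln (a i / b i)) \<ge> al * ln (al / sum b I)"
proof -
  obtain j where j: "j \<in> I" "a j > 0"
  proof (rule ccontr)
    assume "\<not> thesis"
    then have "\<forall>i\<in>I. a i = 0" using assms(2) that by force
    then show False using assms by simp
  qed
  have be: "sum b I > 0"
    using assms j by (intro sum_pos2[of I j]) auto
  have "(\<Sum>i\<in>I. a i * ln (a i / b i)) \<ge> (\<Sum>i\<in>I. a i * ln (al / sum b I) + a i - b i * al / sum b I)"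
    by (intro sum_mono logsum_term) (use assms be in auto)
  also have "(\<Sum>i\<in>I. a i * ln (al / sum b I) + a i - b i * al / sum b I) = al * ln (al / sum b I)"
    using be assms by (simp add: sum.distrib sum_subtractf sum_distrib_right[symmetric] sum_divide_distrib[symmetric])
  finally show ?thesis .
qed


definition tri :: "(real \<times> real) set" where
  "tri = {(\<rho>, \<eta>). 0 \<le> \<eta> \<and> \<eta> \<le> \<rho> \<and> \<rho> \<le> (1::real)}"

lemma tri_iff: "p \<in> tri \<longleftrightarrow> 0 \<le> snd p \<and> snd p \<le> fst p \<and> fst p \<le> 1"
  by (cases p) (auto simp: tri_def)

locale chan =
  fixes W :: "'x::finite \<Rightarrow> 'y::finite \<Rightarrow> real" and P :: "'x \<Rightarrow> real"
  assumes ch: "channel W" and di: "distr P"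
begin

lemma W_nn: "W x y \<ge> 0" using ch by (simp add: channel_def)
lemma P_nn: "P x \<ge> 0" using di by (simp add: distr_def)

lemma PW_sum: "(\<Sum>y\<in>UNIV. \<Sum>x\<in>UNIV. P x * W x y) = 1"
proof -
  have "(\<Sum>y\<in>UNIV. \<Sum>x\<in>UNIV. P x * W x y) = (\<Sum>x\<in>UNIV. P x * (\<Sum>y\<in>UNIV. W x y))"
    by (subst sum.swap) (simp add: sum_distrib_left)
  also have "\<dots> = 1" using ch di by (simp add: channel_def distr_def)
  finally show ?thesis .
qed

definition gg :: "real \<times> real \<Rightarrow> 'y \<Rightarrow> 'x \<Rightarrow> real" where
  "gg p y x = P x * W x y powr ((1 + snd p) / (1 + fst p))"
definition GG :: "real \<times> real \<Rightarrow> 'y \<Rightarrow> real" where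
  "GG p y = (\<Sum>x\<in>UNIV. gg p y x)"
definition ZZ :: "real \<times> real \<Rightarrow> real" where
  "ZZ p = (\<Sum>y\<in>UNIV. GG p y powr (1 + fst p))"
definition QQ :: "real \<times> real \<Rightarrow> 'y \<Rightarrow> 'x \<Rightarrow> real" where
  "QQ p y x = GG p y powr fst p * gg p y x / ZZ p"

definition good :: "real \<times> real \<Rightarrow> bool" where
  "good p \<longleftrightarrow> 1 + fst p > 0 \<and> 1 + snd p > 0"

lemma tri_good: "p \<in> tri \<Longrightarrow> good p" by (auto simp: tri_iff good_def)

lemma E0_ZZ: "E_0 W (fst p) (snd p) P = - ln (ZZ p)"
  by (simp add: E_0_def ZZ_def GG_def gg_def)

lemma gg_nn: "gg p y x \<ge> 0" using P_nn by (simp add: gg_def)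

lemma gg_pos: "good p \<Longrightarrow> gg p y x > 0 \<longleftrightarrow> P x * W x y > 0"
proof -
  assume g: "good p"
  then have s: "(1 + snd p) / (1 + fst p) > 0" by (simp add: good_def)
  show ?thesis
    using P_nn[of x] W_nn[of x y] s
    by (auto simp: gg_def zero_less_mult_iff less_le)
qed

lemma GG_nn: "GG p y \<ge> 0" by (simp add: GG_def sum_nonneg gg_nn)

lemma GG_pos: "good p \<Longrightarrow> P x * W x y > 0 \<Longrightarrow> GG p y > 0"
  unfolding GG_def by (rule sum_pos2[of UNIV x]) (auto simp: gg_nn gg_pos)

lemma ex_PW: "\<exists>x y. P x * W x y > 0"
proof (rule ccontr)
  assume nt: "\<not> ?thesis"
  have z: "P x * W x y = 0" for x y
  proof -
    have "P x * W x y \<ge> 0" using P_nn W_nn by simp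
    moreover have "\<not> P x * W x y > 0" using nt by blast
    ultimately show ?thesis by simp
  qed
  have "(\<Sum>y\<in>UNIV. \<Sum>x\<in>UNIV. P x * W x y) = 0" by (simp only: z sum.neutral_const)
  then show False using PW_sum by simp
qed

lemma ZZ_pos: "good p \<Longrightarrow> ZZ p > 0"
proof -
  assume g: "good p"
  obtain x y where "P x * W x y > 0" using ex_PW by blast
  then have "GG p y > 0" using GG_pos g by blast
  then have "GG p y powr (1 + fst p) > 0" by simp
  then show ?thesis unfolding ZZ_def
    by (intro sum_pos2[of UNIV y]) auto
qed


lemma powr_1p: "(G::real) \<ge> 0 \<Longrightarrow> G powr r * G = G powr (1 + r)"
  by (simp add: powr_add)

lemma term_alg:
  fixes q lq lp lw lt r s e :: real
  assumes "(1 + r) * s = 1 + e"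
  shows "q*(lq-lp-lw) + r*(q*(lq-lt-lp)) + e*(q*(-lw)) = q*(lt + (1+r)*(lq-lt-lp-s*lw))"
proof -
  have e: "e = (1 + r) * s - 1" using assms by simp
  show ?thesis unfolding e by (simp add: algebra_simps)
qed

lemma J_nn: "Q \<in> joint_dists P W \<Longrightarrow> Q y x \<ge> 0" by (simp add: joint_dists_def)
lemma J_sum: "Q \<in> joint_dists P W \<Longrightarrow> (\<Sum>y\<in>UNIV. margT Q y) = 1" by (simp add: joint_dists_def margT_def)
lemma J_supp: "Q \<in> joint_dists P W \<Longrightarrow> Q y x > 0 \<Longrightarrow> P x * W x y > 0" by (simp add: joint_dists_def)

lemma margT_ge: "Q \<in> joint_dists P W \<Longrightarrow> Q y x \<le> margT Q y"
  unfolding margT_def by (rule member_le_sum) (auto simp: J_nn)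

lemma pos_ex: "margT Q y > 0 \<Longrightarrow> \<exists>x. Q y x > 0"
proof (rule ccontr)
  assume a: "margT Q y > 0" and n: "\<not> (\<exists>x. Q y x > 0)"
  then have "\<forall>x. Q y x \<le> 0" by (simp add: not_less)
  then have "margT Q y \<le> 0" unfolding margT_def by (simp add: sum_nonpos)
  then show False using a by simp
qed

lemma Ldecomp:
  assumes Q: "Q \<in> joint_dists P W" and g: "good p"
  shows "divKL Q P W + fst p * A_TV Q P + snd p * B_TV Q W =
    (\<Sum>y\<in>UNIV. \<Sum>x\<in>UNIV. Q y x * (ln (margT Q y) + (1 + fst p) * ln (Q y x / (margT Q y * gg p y x))))"
proof -
  have "divKL Q P W + fst p * A_TV Q P + snd p * B_TV Q W =
    (\<Sum>y\<in>UNIV. \<Sum>x\<in>UNIV. Q y x * ln (Q y x / (P x * W x y)) + fst p * (Q y x * ln (condV Q y x / P x))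
       + snd p * (Q y x * (- ln (W x y))))"
    unfolding divKL_def A_TV_def B_TV_def by (simp only: sum.distrib sum_distrib_left)
  also have "\<dots> = (\<Sum>y\<in>UNIV. \<Sum>x\<in>UNIV. Q y x * (ln (margT Q y) + (1 + fst p) * ln (Q y x / (margT Q y * gg p y x))))"
  proof (intro sum.cong refl)
    fix y x
    show "Q y x * ln (Q y x / (P x * W x y)) + fst p * (Q y x * ln (condV Q y x / P x))
       + snd p * (Q y x * (- ln (W x y))) = Q y x * (ln (margT Q y) + (1 + fst p) * ln (Q y x / (margT Q y * gg p y x)))"
    proof (cases "Q y x = 0")
      case True then show ?thesis by simp
    next
      case False
      then have q: "Q y x > 0" using J_nn[OF Q] by (simp add: less_le)
      then have pw: "P x * W x y > 0" using J_supp[OF Q] by blast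
      then have P: "P x > 0" and Wp: "W x y > 0" using P_nn[of x] W_nn[of x y]
        by (auto simp: zero_less_mult_iff)
      have T: "margT Q y > 0" using q margT_ge[OF Q, of y x] by simp
      define s where "s = (1 + snd p) / (1 + fst p)"
      have hs: "(1 + fst p) * s = 1 + snd p" using g by (simp add: s_def good_def)
      have ggv: "gg p y x = P x * W x y powr s" by (simp add: gg_def s_def)
      have l1: "ln (Q y x / (P x * W x y)) = ln (Q y x) - ln (P x) - ln (W x y)"
        using q P Wp by (simp add: ln_div ln_mult)
      have l2: "ln (condV Q y x / P x) = ln (Q y x) - ln (margT Q y) - ln (P x)"
        using q P T by (simp add: condV_def ln_div ln_mult)
      have l3: "ln (Q y x / (margT Q y * gg p y x)) = ln (Q y x) - ln (margT Q y) - ln (P x) - s * ln (W x y)"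
        using q P T Wp by (simp add: ggv ln_div ln_mult)
      show ?thesis unfolding l1 l2 l3 by (rule term_alg[OF hs])
    qed
  qed
  finally show ?thesis .
qed

lemma weak:
  assumes Q: "Q \<in> joint_dists P W" and g: "good p"
  shows "- ln (ZZ p) \<le> divKL Q P W + fst p * A_TV Q P + snd p * B_TV Q W"
proof -
  have r: "1 + fst p > 0" using g by (simp add: good_def)
  have c1: "(\<Sum>x\<in>UNIV. Q y x * (ln (margT Q y) + (1 + fst p) * ln (Q y x / (margT Q y * gg p y x))))
     \<ge> margT Q y * ln (margT Q y / GG p y powr (1 + fst p))" for y
  proof (cases "margT Q y = 0")
    case True
    then have "\<forall>x\<in>UNIV. Q y x = 0" unfolding margT_def
      using sum_nonneg_eq_0_iff[of UNIV "Q y"] J_nn[OF Q] by auto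
    then show ?thesis using True by simp
  next
    case False
    then have T: "margT Q y > 0" using margT_ge[OF Q] J_nn[OF Q] unfolding margT_def
      by (simp add: less_le sum_nonneg)
    then obtain x0 where "Q y x0 > 0" using pos_ex[of Q y] by blast
    then have G: "GG p y > 0" using GG_pos[OF g] J_supp[OF Q] by blast
    have ls: "(\<Sum>x\<in>UNIV. Q y x * ln (Q y x / (margT Q y * gg p y x)))
        \<ge> margT Q y * ln (margT Q y / (\<Sum>x\<in>UNIV. margT Q y * gg p y x))"
      by (rule logsum) (use T J_nn[OF Q] gg_nn gg_pos[OF g] J_supp[OF Q] in
          \<open>auto simp: margT_def\<close>)
    have "(\<Sum>x\<in>UNIV. margT Q y * gg p y x) = margT Q y * GG p y" by (simp add: GG_def sum_distrib_left)
    then have e1: "margT Q y * ln (margT Q y / (\<Sum>x\<in>UNIV. margT Q y * gg p y x)) = - margT Q y * ln (GG p y)"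
      using T G by (simp add: ln_div)
    have "(\<Sum>x\<in>UNIV. Q y x * (ln (margT Q y) + (1 + fst p) * ln (Q y x / (margT Q y * gg p y x))))
       = (\<Sum>x\<in>UNIV. Q y x * ln (margT Q y) + (1 + fst p) * (Q y x * ln (Q y x / (margT Q y * gg p y x))))"
      by (rule sum.cong) (simp_all add: algebra_simps)
    also have "\<dots> = (\<Sum>x\<in>UNIV. Q y x) * ln (margT Q y) + (1 + fst p) * (\<Sum>x\<in>UNIV. Q y x * ln (Q y x / (margT Q y * gg p y x)))"
      by (simp only: sum.distrib sum_distrib_left sum_distrib_right)
    also have "\<dots> = margT Q y * ln (margT Q y) + (1 + fst p) * (\<Sum>x\<in>UNIV. Q y x * ln (Q y x / (margT Q y * gg p y x)))"
      by (simp only: margT_def)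
    also have "\<dots> \<ge> margT Q y * ln (margT Q y) + (1 + fst p) * (- margT Q y * ln (GG p y))"
    proof -
      have "(\<Sum>x\<in>UNIV. Q y x * ln (Q y x / (margT Q y * gg p y x))) \<ge> - margT Q y * ln (GG p y)"
        using ls e1 by linarith
      then have "(1 + fst p) * (\<Sum>x\<in>UNIV. Q y x * ln (Q y x / (margT Q y * gg p y x))) \<ge> (1 + fst p) * (- margT Q y * ln (GG p y))"
        using r by (intro mult_left_mono) auto
      then show ?thesis by linarith
    qed
    also have "margT Q y * ln (margT Q y) + (1 + fst p) * (- margT Q y * ln (GG p y))
        = margT Q y * ln (margT Q y / GG p y powr (1 + fst p))"
      using T G by (simp add: ln_div algebra_simps)
    finally show ?thesis .
  qed
  have c2: "(\<Sum>y\<in>UNIV. margT Q y * ln (margT Q y / GG p y powr (1 + fst p)))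
      \<ge> 1 * ln (1 / (\<Sum>y\<in>UNIV. GG p y powr (1 + fst p)))"
  proof (rule logsum[where b="\<lambda>y. GG p y powr (1 + fst p)"])
    fix y assume "margT Q y > 0"
    then obtain x0 where "Q y x0 > 0" using pos_ex[of Q y] by blast
    then have G: "GG p y > 0" using GG_pos[OF g] J_supp[OF Q] by blast
    then show "GG p y powr (1 + fst p) > 0" by simp
  qed (use J_sum[OF Q] J_nn[OF Q] in \<open>auto simp: margT_def sum_nonneg\<close>)
  have "- ln (ZZ p) \<le> (\<Sum>y\<in>UNIV. margT Q y * ln (margT Q y / GG p y powr (1 + fst p)))"
    using c2 ZZ_pos[OF g] by (simp add: ln_div ZZ_def)
  also have "\<dots> \<le> (\<Sum>y\<in>UNIV. \<Sum>x\<in>UNIV. Q y x * (ln (margT Q y) + (1 + fst p) * ln (Q y x / (margT Q y * gg p y x))))"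
    by (rule sum_mono) (rule c1)
  also have "\<dots> = divKL Q P W + fst p * A_TV Q P + snd p * B_TV Q W" using Ldecomp[OF Q g] by simp
  finally show ?thesis .
qed


lemma QQ_nn: "good p \<Longrightarrow> QQ p y x \<ge> 0"
  using ZZ_pos[of p] GG_nn gg_nn by (simp add: QQ_def)

lemma margT_QQ: "good p \<Longrightarrow> margT (QQ p) y = GG p y powr (1 + fst p) / ZZ p"
  by (simp add: margT_def QQ_def sum_divide_distrib[symmetric] sum_distrib_left[symmetric]
      GG_def[symmetric] powr_1p GG_nn)

lemma QQ_J: "good p \<Longrightarrow> QQ p \<in> joint_dists P W"
proof -
  assume g: "good p"
  have s: "(\<Sum>y\<in>UNIV. \<Sum>x\<in>UNIV. QQ p y x) = 1"
    using margT_QQ[OF g] ZZ_pos[OF g]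
    by (simp add: margT_def[symmetric] sum_divide_distrib[symmetric] ZZ_def[symmetric])
  have "P x * W x y > 0" if "QQ p y x > 0" for y x
  proof -
    have "gg p y x \<noteq> 0" using that by (auto simp: QQ_def)
    then have "gg p y x > 0" using gg_nn less_le by metis
    then show ?thesis using gg_pos[OF g] by blast
  qed
  then show ?thesis using s QQ_nn[OF g] by (auto simp: joint_dists_def)
qed

lemma QQ_val:
  assumes g: "good p"
  shows "divKL (QQ p) P W + fst p * A_TV (QQ p) P + snd p * B_TV (QQ p) W = - ln (ZZ p)"
proof -
  have Z: "ZZ p > 0" by (rule ZZ_pos[OF g])
  have "divKL (QQ p) P W + fst p * A_TV (QQ p) P + snd p * B_TV (QQ p) W =
    (\<Sum>y\<in>UNIV. \<Sum>x\<in>UNIV. QQ p y x * (ln (margT (QQ p) y) + (1 + fst p) * ln (QQ p y x / (margT (QQ p) y * gg p y x))))"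
    by (rule Ldecomp[OF QQ_J[OF g] g])
  also have "\<dots> = (\<Sum>y\<in>UNIV. \<Sum>x\<in>UNIV. QQ p y x * (- ln (ZZ p)))"
  proof (intro sum.cong refl)
    fix y x
    show "QQ p y x * (ln (margT (QQ p) y) + (1 + fst p) * ln (QQ p y x / (margT (QQ p) y * gg p y x)))
      = QQ p y x * (- ln (ZZ p))"
    proof (cases "gg p y x = 0")
      case True then show ?thesis by (simp add: QQ_def)
    next
      case False
      then have gp: "gg p y x > 0" using gg_nn less_le by metis
      then have G: "GG p y > 0" using GG_pos[OF g] gg_pos[OF g] by blast
      have e1: "QQ p y x / (margT (QQ p) y * gg p y x) = 1 / GG p y"
        using gp G Z by (simp add: margT_QQ[OF g] QQ_def powr_1p[symmetric] field_simps)
      have e2: "ln (margT (QQ p) y) = (1 + fst p) * ln (GG p y) - ln (ZZ p)"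
        using G Z by (simp add: margT_QQ[OF g] ln_div)
      show ?thesis unfolding e1 e2 using G by (simp add: ln_div algebra_simps)
    qed
  qed
  also have "\<dots> = - ln (ZZ p)"
  proof -
    have "(\<Sum>y\<in>UNIV. \<Sum>x\<in>UNIV. QQ p y x * (- ln (ZZ p))) = (\<Sum>y\<in>UNIV. \<Sum>x\<in>UNIV. QQ p y x) * (- ln (ZZ p))"
      by (simp only: sum_distrib_right)
    then show ?thesis using QQ_J[OF g] by (simp add: joint_dists_def)
  qed
  finally show ?thesis .
qed


lemma QQ_pos: "good p \<Longrightarrow> P x * W x y > 0 \<Longrightarrow> QQ p y x > 0"
  using GG_pos[of p x y] gg_pos[of p y x] ZZ_pos[of p] by (simp add: QQ_def)

lemma QQ_zero: "good p \<Longrightarrow> \<not> P x * W x y > 0 \<Longrightarrow> QQ p y x = 0"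
proof -
  assume g: "good p" and n: "\<not> P x * W x y > 0"
  then have "\<not> gg p y x > 0" using gg_pos by blast
  then have "gg p y x = 0" using gg_nn[of p y x] by simp
  then show ?thesis by (simp add: QQ_def)
qed

lemma cont_gg: "continuous_on tri (\<lambda>p. gg p y x)"
  unfolding gg_def
  by (intro continuous_intros continuous_on_powr') (auto simp: tri_iff W_nn add_pos_nonneg)

lemma cont_GG: "continuous_on tri (\<lambda>p. GG p y)"
  unfolding GG_def by (intro continuous_intros cont_gg)

lemma cont_ZZ: "continuous_on tri (\<lambda>p. ZZ p)"
  unfolding ZZ_def
  by (intro continuous_intros continuous_on_powr' cont_GG) (auto simp: tri_iff GG_nn)

lemma cont_QQ: "continuous_on tri (\<lambda>p. QQ p y x)"
proof (cases "P x * W x y > 0")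
  case True
  have "GG p y \<noteq> 0" "ZZ p \<noteq> 0" if "p \<in> tri" for p
    using GG_pos[OF tri_good[OF that] True] ZZ_pos[OF tri_good[OF that]] by auto
  then show ?thesis unfolding QQ_def
    by (intro continuous_intros cont_GG cont_gg cont_ZZ) auto
next
  case False
  have "continuous_on tri (\<lambda>p. 0::real)" by (rule continuous_on_const)
  then show ?thesis by (rule continuous_on_cong[THEN iffD1, rotated 2])
      (use QQ_zero[OF tri_good False] in auto)
qed

lemma cont_margT: "continuous_on tri (\<lambda>p. margT (QQ p) y)"
  unfolding margT_def by (intro continuous_intros cont_QQ)

lemma margT_pos: "good p \<Longrightarrow> P x * W x y > 0 \<Longrightarrow> margT (QQ p) y > 0"
  using GG_pos[of p x y] ZZ_pos[of p] by (simp add: margT_QQ)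

lemma cont_condV: "P x * W x y > 0 \<Longrightarrow> continuous_on tri (\<lambda>p. condV (QQ p) y x)"
  unfolding condV_def
  by (intro continuous_intros cont_QQ cont_margT) (use margT_pos tri_good in force)

lemma zero_case_cont:
  assumes "\<And>p. p \<in> tri \<Longrightarrow> f p = (0::real)"
  shows "continuous_on tri f"
  using continuous_on_const[of tri "0::real"] by (rule continuous_on_cong[THEN iffD1, rotated 2]) (use assms in auto)

lemma cont_D: "continuous_on tri (\<lambda>p. divKL (QQ p) P W)"
  unfolding divKL_def
proof (intro continuous_on_sum)
  fix y x
  show "continuous_on tri (\<lambda>p. QQ p y x * ln (QQ p y x / (P x * W x y)))"
  proof (cases "P x * W x y > 0")
    case True
    have "QQ p y x / (P x * W x y) \<noteq> 0" if "p \<in> tri" for p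
      using QQ_pos[OF tri_good[OF that] True] True by auto
    then show ?thesis
      by (intro continuous_intros cont_QQ) auto
  qed (rule zero_case_cont, simp add: QQ_zero tri_good)
qed

lemma cont_A: "continuous_on tri (\<lambda>p. A_TV (QQ p) P)"
  unfolding A_TV_def
proof (intro continuous_on_sum)
  fix y x
  show "continuous_on tri (\<lambda>p. QQ p y x * ln (condV (QQ p) y x / P x))"
  proof (cases "P x * W x y > 0")
    case True
    have "condV (QQ p) y x / P x \<noteq> 0" if "p \<in> tri" for p
      using QQ_pos[OF tri_good[OF that] True] margT_pos[OF tri_good[OF that] True] True
      by (auto simp: condV_def)
    then show ?thesis
      by (intro continuous_intros cont_QQ cont_condV True) auto
  qed (rule zero_case_cont, simp add: QQ_zero tri_good)
qed

lemma cont_B: "continuous_on tri (\<lambda>p. B_TV (QQ p) W)"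
  unfolding B_TV_def by (intro continuous_intros cont_QQ)


definition ell :: "real \<Rightarrow> real \<Rightarrow> ('y \<Rightarrow> 'x \<Rightarrow> real) \<Rightarrow> real \<times> real \<Rightarrow> real" where
  "ell R K Q q = divKL Q P W + fst q * (A_TV Q P - R) + snd q * (B_TV Q W - K)"

definition FF :: "real \<Rightarrow> real \<Rightarrow> real \<times> real \<Rightarrow> real" where
  "FF R K p = E_0 W (fst p) (snd p) P - fst p * R - snd p * K"

definition val :: "real \<Rightarrow> real \<Rightarrow> ('y \<Rightarrow> 'x \<Rightarrow> real) \<Rightarrow> real" where
  "val R K Q = divKL Q P W + posp (A_TV Q P - R + posp (B_TV Q W - K))"

lemma weak': "Q \<in> joint_dists P W \<Longrightarrow> good p \<Longrightarrow> FF R K p \<le> ell R K Q p"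
  using weak[of Q p] by (simp add: FF_def ell_def E0_ZZ algebra_simps)

lemma attain: "good p \<Longrightarrow> FF R K p = ell R K (QQ p) p"
  using QQ_val[of p] by (simp add: FF_def ell_def E0_ZZ algebra_simps)

lemma cont_ell: "continuous_on tri (\<lambda>p. ell R K (QQ p) v)"
  unfolding ell_def by (intro continuous_intros cont_D cont_A cont_B)

lemma cont_FF: "continuous_on tri (FF R K)"
proof -
  have "continuous_on tri (\<lambda>p. ell R K (QQ p) p)"
    unfolding ell_def by (intro continuous_intros cont_D cont_A cont_B)
  then show ?thesis
    by (rule continuous_on_cong[THEN iffD1, rotated 2]) (use attain tri_good in auto)
qed

lemma tri_convex:
  assumes a: "a \<in> tri" and b: "b \<in> tri" and t: "0 \<le> t" "t \<le> 1"
  shows "a + t *\<^sub>R (b - a) \<in> tri"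
proof -
  have sa: "0 \<le> snd a" and sb: "0 \<le> snd b" using a b by (auto simp: tri_iff)
  have t1: "0 \<le> 1 - t" using t by simp
  have h1: "0 \<le> (1-t)* snd a" "0 \<le> t* snd b"
    by (rule mult_nonneg_nonneg[OF t1 sa], rule mult_nonneg_nonneg[OF t(1) sb])
  have h3: "(1-t)* snd a \<le> (1-t)* fst a" "t* snd b \<le> t* fst b"
    using a b t by (auto simp: tri_iff intro: mult_left_mono)
  have h5: "(1-t)* fst a \<le> (1-t)*1" "t* fst b \<le> t*1"
    using a b t by (auto simp: tri_iff intro: mult_left_mono simp del: mult_1_right)
  have e1: "snd a + t*(snd b - snd a) = (1-t)* snd a + t* snd b"
    and e2: "fst a + t*(fst b - fst a) = (1-t)* fst a + t* fst b" by (simp_all add: algebra_simps)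
  show ?thesis unfolding tri_iff using h1 h3 h5 e1 e2 by simp
qed

lemma ell_lin: "ell R K Q (a + t *\<^sub>R (b - a)) = (1 - t) * ell R K Q a + t * ell R K Q b"
  by (simp add: ell_def algebra_simps)

lemma compact_tri: "compact tri"
proof -
  have eq: "tri = {p. 0 \<le> snd p} \<inter> {p. snd p \<le> fst p} \<inter> {p. fst p \<le> (1::real)}"
    by (auto simp: tri_iff)
  have "closed tri" unfolding eq
    by (intro closed_Int closed_Collect_le continuous_intros)
  moreover have "bounded tri"
  proof (rule bounded_subset[OF bounded_cbox[of "(0,0)" "(1,1)"]])
    show "tri \<subseteq> cbox (0, 0) (1::real, 1::real)"
      by (auto simp: tri_def cbox_Pair_eq)
  qed
  ultimately show ?thesis by (simp add: compact_eq_bounded_closed)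
qed

lemma tri_ne: "(0,0) \<in> tri" by (simp add: tri_def)

lemma key:
  assumes ps: "ps \<in> tri" and mx: "\<And>p. p \<in> tri \<Longrightarrow> FF R K p \<le> FF R K ps" and v: "v \<in> tri"
  shows "ell R K (QQ ps) v \<le> FF R K ps"
proof -
  define pt where "pt t = ps + t *\<^sub>R (v - ps)" for t :: real
  have bnd: "ell R K (QQ (pt t)) v \<le> FF R K ps" if t: "0 < t" "t \<le> 1" for t
  proof -
    have pin: "pt t \<in> tri" unfolding pt_def by (rule tri_convex) (use ps v t in auto)
    have "FF R K (pt t) = ell R K (QQ (pt t)) (pt t)" by (rule attain[OF tri_good[OF pin]])
    also have "\<dots> = (1 - t) * ell R K (QQ (pt t)) ps + t * ell R K (QQ (pt t)) v"
      unfolding pt_def by (rule ell_lin)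
    finally have e: "FF R K (pt t) = (1 - t) * ell R K (QQ (pt t)) ps + t * ell R K (QQ (pt t)) v" .
    have "FF R K ps \<le> ell R K (QQ (pt t)) ps"
      by (rule weak'[OF QQ_J[OF tri_good[OF pin]] tri_good[OF ps]])
    then have "(1 - t) * FF R K ps \<le> (1 - t) * ell R K (QQ (pt t)) ps"
      using t by (intro mult_left_mono) auto
    moreover have "FF R K (pt t) \<le> FF R K ps" by (rule mx[OF pin])
    ultimately have "t * ell R K (QQ (pt t)) v \<le> t * FF R K ps" using e by (simp add: algebra_simps)
    then show ?thesis using t by simp
  qed
  have lim0: "(pt \<longlongrightarrow> ps + 0 *\<^sub>R (v - ps)) (at_right 0)"
    unfolding pt_def by (intro tendsto_intros)
  then have lim: "(pt \<longlongrightarrow> ps) (at_right 0)" by simp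
  have ev: "eventually (\<lambda>t. pt t \<in> tri) (at_right 0)"
    by (rule eventually_at_rightI[of 0 1]) (auto simp: pt_def intro!: tri_convex ps v)
  have "((\<lambda>t. ell R K (QQ (pt t)) v) \<longlongrightarrow> ell R K (QQ ps) v) (at_right 0)"
    by (rule continuous_on_tendsto_compose[OF cont_ell lim ps ev])
  moreover have "eventually (\<lambda>t. ell R K (QQ (pt t)) v \<le> FF R K ps) (at_right 0)"
    by (rule eventually_at_rightI[of 0 1]) (auto intro!: bnd)
  ultimately show ?thesis
    by (rule tendsto_upperbound) simp
qed

lemma posp_lin:
  fixes a b \<rho> \<eta> :: real
  assumes "0 \<le> \<eta>" "\<eta> \<le> \<rho>" "\<rho> \<le> 1"
  shows "\<rho> * a + \<eta> * b \<le> posp (a + posp b)"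
proof -
  have 1: "\<eta> * b \<le> \<eta> * max 0 b" using assms by (intro mult_left_mono) auto
  have 2: "\<eta> * max 0 b \<le> \<rho> * max 0 b" using assms by (intro mult_right_mono) auto
  have 3: "\<rho> * (a + max 0 b) \<le> max 0 (a + max 0 b)"
  proof (cases "a + max 0 b \<ge> 0")
    case True
    then have "\<rho> * (a + max 0 b) \<le> 1 * (a + max 0 b)" using assms by (intro mult_right_mono) auto
    then show ?thesis by simp
  next
    case False
    then have "\<rho> * (a + max 0 b) \<le> 0" using assms by (intro mult_nonneg_nonpos) auto
    then show ?thesis by simp
  qed
  show ?thesis unfolding posp_def using 1 2 3 by (simp add: algebra_simps)
qed

lemma val_ge: "Q \<in> joint_dists P W \<Longrightarrow> p \<in> tri \<Longrightarrow> FF R K p \<le> val R K Q"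
proof -
  assume Q: "Q \<in> joint_dists P W" and p: "p \<in> tri"
  have "FF R K p \<le> ell R K Q p" by (rule weak'[OF Q tri_good[OF p]])
  also have "\<dots> \<le> val R K Q" unfolding ell_def val_def
    using posp_lin[of "snd p" "fst p" "A_TV Q P - R" "B_TV Q W - K"] p by (simp add: tri_iff)
  finally show ?thesis .
qed

lemma val_vertex: "val R K Q \<le> max (ell R K Q (0,0)) (max (ell R K Q (1,0)) (ell R K Q (1,1)))"
  unfolding val_def ell_def posp_def by (simp add: max_def)

theorem main: "E_e W P R K = (SUP p\<in>{(\<rho>, \<eta>). 0 \<le> \<eta> \<and> \<eta> \<le> \<rho> \<and> \<rho> \<le> 1}.
       E_0 W (fst p) (snd p) P - fst p * R - snd p * K)"
proof -
  have S: "{(\<rho>, \<eta>). 0 \<le> \<eta> \<and> \<eta> \<le> \<rho> \<and> (\<rho>::real) \<le> 1} = tri" by (simp add: tri_def)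
  have F: "(\<lambda>p. E_0 W (fst p) (snd p) P - fst p * R - snd p * K) = FF R K" by (simp add: FF_def fun_eq_iff)
  have E: "E_e W P R K = (INF Q\<in>joint_dists P W. val R K Q)" by (simp add: E_e_def val_def)
  obtain ps where ps: "ps \<in> tri" and mx: "\<And>p. p \<in> tri \<Longrightarrow> FF R K p \<le> FF R K ps"
    using continuous_attains_sup[OF compact_tri _ cont_FF] tri_ne by blast
  have J: "QQ ps \<in> joint_dists P W" by (rule QQ_J[OF tri_good[OF ps]])
  have vps: "val R K (QQ ps) \<le> FF R K ps"
  proof -
    have "ell R K (QQ ps) (0,0) \<le> FF R K ps" "ell R K (QQ ps) (1,0) \<le> FF R K ps"
      "ell R K (QQ ps) (1,1) \<le> FF R K ps"
      by (rule key[OF ps mx]; simp add: tri_def)+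
    then show ?thesis using val_vertex[of R K "QQ ps"] by simp
  qed
  have bb: "bdd_below (val R K ` joint_dists P W)"
    by (rule bdd_belowI[of _ "FF R K ps"]) (auto intro: val_ge[OF _ ps])
  have ba: "bdd_above (FF R K ` tri)"
    by (rule bdd_aboveI[of _ "val R K (QQ ps)"]) (use val_ge J in auto)
  have le1: "(INF Q\<in>joint_dists P W. val R K Q) \<le> (SUP p\<in>tri. FF R K p)"
  proof -
    have "(INF Q\<in>joint_dists P W. val R K Q) \<le> val R K (QQ ps)" by (rule cINF_lower[OF bb J])
    also have "\<dots> \<le> FF R K ps" by (rule vps)
    also have "\<dots> \<le> (SUP p\<in>tri. FF R K p)" by (rule cSUP_upper[OF ps ba])
    finally show ?thesis .
  qed
  have le2: "(SUP p\<in>tri. FF R K p) \<le> (INF Q\<in>joint_dists P W. val R K Q)"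
  proof (rule cSUP_least)
    show "tri \<noteq> {}" using tri_ne by blast
    fix p assume p: "p \<in> tri"
    show "FF R K p \<le> (INF Q\<in>joint_dists P W. val R K Q)"
      by (rule cINF_greatest) (use J val_ge p in auto)
  qed
  show ?thesis unfolding S F E using le1 le2 by simp
qed

end

theorem lemma7:
  fixes W :: "'x::finite \<Rightarrow> 'y::finite \<Rightarrow> real" and P :: "'x \<Rightarrow> real" and R K :: real
  assumes "channel W" and "distr P" and "R > 0" and "K > 0"
  shows "E_e W P R K =
    (SUP p\<in>{(\<rho>, \<eta>). 0 \<le> \<eta> \<and> \<eta> \<le> \<rho> \<and> \<rho> \<le> 1}.
       E_0 W (fst p) (snd p) P - fst p * R - snd p * K)"
proof -
  interpret chan W P using assms by unfold_locales
  show ?thesis by (rule main)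
qed

end
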